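(* Let $x\in V(D^+)\setminus\{s\}$ with $g^*(x)\neq\infty$, and let $y^*$ be a vertex with $g(x,y^* )=g^*(x)$. Then $(x,y^* )$ is valid, i.e. there exist a directed $sx$-path, a directed $y^*x$-path and a directed $y^*t$-path in $D^+$ which are mutually internally disjoint.
   Context: $G=(V,E,w)$ is a simple, connected, undirected graph with positive edge lengths, $s,t\in V$, $d(\cdot,\cdot)$ the shortest path distance in $G$. $D$ is the union of all shortest $st$-paths of $G$, and $D^+$ is the directed acyclic graph obtained from $D$ by orienting every edge toward $t$. $x\prec y$ means $x$ is an ancestor of $y$ in $D^+$ (a directed path of positive length from $x$ to $y$ exists). For $x\neq s$, $v\neq x$ is an $s$-dominator of $x$ if every directed path from $s$ to $x$ in $D^+$ contains $v$, and $I_s(x)$ is the $s$-dominator of $x$ closest to $x$ (every other $s$-dominator of $x$ is an $s$-dominator of $I_s(x)$). Symmetrically, for $x\neq t$, $v\neq x$ is a $t$-dominator of $x$ if every directed path from $x$ to $t$ in $D^+$ contains $v$, and $I_t(x)$ is the $t$-dominator closest to $x$. For $x\neq s$, $C(x)=\{v: I_s(x)\prec v\prec x\}$. For $x\neq s$ and $y\in V(D^+)$, $g(x,y)=d(y,x)$ if $y\in C(x)$ and $x\prec I_t(y)$, and $g(x,y)=\infty$ otherwise; $g^*(x)=\min_y g(x,y)$. Paths are internally disjoint if they share no vertex other than common endpoints. *)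

theory Defs
  imports Complex_Main "HOL-Library.Extended_Real"
begin

definition is_walk :: "('a \<times> 'a) set \<Rightarrow> 'a list \<Rightarrow> 'a \<Rightarrow> 'a \<Rightarrow> bool" where
  "is_walk E p u v \<longleftrightarrow> p \<noteq> [] \<and> hd p = u \<and> last p = v \<and>
     (\<forall>i < length p - 1. (p ! i, p ! Suc i) \<in> E)"

definition is_path :: "('a \<times> 'a) set \<Rightarrow> 'a list \<Rightarrow> 'a \<Rightarrow> 'a \<Rightarrow> bool" where
  "is_path E p u v \<longleftrightarrow> is_walk E p u v \<and> distinct p"

definition walk_len :: "('a \<Rightarrow> 'a \<Rightarrow> real) \<Rightarrow> 'a list \<Rightarrow> real" where
  "walk_len w p = (\<Sum>i < length p - 1. w (p ! i) (p ! Suc i))"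

definition simple_graph :: "'a set \<Rightarrow> ('a \<times> 'a) set \<Rightarrow> ('a \<Rightarrow> 'a \<Rightarrow> real) \<Rightarrow> bool" where
  "simple_graph V E w \<longleftrightarrow> finite V \<and> E \<subseteq> V \<times> V \<and> sym E \<and> (\<forall>v. (v, v) \<notin> E)
     \<and> (\<forall>(u, v) \<in> E. w u v > 0 \<and> w u v = w v u)
     \<and> (\<forall>u \<in> V. \<forall>v \<in> V. \<exists>p. is_walk E p u v)"

definition gdist :: "('a \<times> 'a) set \<Rightarrow> ('a \<Rightarrow> 'a \<Rightarrow> real) \<Rightarrow> 'a \<Rightarrow> 'a \<Rightarrow> real" where
  "gdist E w u v = Inf {walk_len w p | p. is_walk E p u v}"

definition shortest_path :: "('a \<times> 'a) set \<Rightarrow> ('a \<Rightarrow> 'a \<Rightarrow> real) \<Rightarrow> 'a list \<Rightarrow> 'a \<Rightarrow> 'a \<Rightarrow> bool" where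
  "shortest_path E w p u v \<longleftrightarrow> is_path E p u v \<and> walk_len w p = gdist E w u v"

(* D^+ : union of all shortest st-paths, every edge oriented toward t
   (i.e. in the direction it is traversed by a shortest st-path) *)
definition DV :: "('a \<times> 'a) set \<Rightarrow> ('a \<Rightarrow> 'a \<Rightarrow> real) \<Rightarrow> 'a \<Rightarrow> 'a \<Rightarrow> 'a set" where
  "DV E w s t = (\<Union>{set p | p. shortest_path E w p s t})"

definition DA :: "('a \<times> 'a) set \<Rightarrow> ('a \<Rightarrow> 'a \<Rightarrow> real) \<Rightarrow> 'a \<Rightarrow> 'a \<Rightarrow> ('a \<times> 'a) set" where
  "DA E w s t = {(p ! i, p ! Suc i) | p i. shortest_path E w p s t \<and> i < length p - 1}"

definition dpath :: "('a \<times> 'a) set \<Rightarrow> ('a \<Rightarrow> 'a \<Rightarrow> real) \<Rightarrow> 'a \<Rightarrow> 'a \<Rightarrow> 'a list \<Rightarrow> 'a \<Rightarrow> 'a \<Rightarrow> bool" where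
  "dpath E w s t p u v \<longleftrightarrow> is_path (DA E w s t) p u v"

definition anc :: "('a \<times> 'a) set \<Rightarrow> ('a \<Rightarrow> 'a \<Rightarrow> real) \<Rightarrow> 'a \<Rightarrow> 'a \<Rightarrow> 'a \<Rightarrow> 'a \<Rightarrow> bool" where
  "anc E w s t x y \<longleftrightarrow> (x, y) \<in> (DA E w s t)\<^sup>+"

definition sdom :: "('a \<times> 'a) set \<Rightarrow> ('a \<Rightarrow> 'a \<Rightarrow> real) \<Rightarrow> 'a \<Rightarrow> 'a \<Rightarrow> 'a \<Rightarrow> 'a \<Rightarrow> bool" where
  "sdom E w s t v x \<longleftrightarrow> v \<noteq> x \<and> (\<forall>p. dpath E w s t p s x \<longrightarrow> v \<in> set p)"

definition tdom :: "('a \<times> 'a) set \<Rightarrow> ('a \<Rightarrow> 'a \<Rightarrow> real) \<Rightarrow> 'a \<Rightarrow> 'a \<Rightarrow> 'a \<Rightarrow> 'a \<Rightarrow> bool" where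
  "tdom E w s t v x \<longleftrightarrow> v \<noteq> x \<and> (\<forall>p. dpath E w s t p x t \<longrightarrow> v \<in> set p)"

definition Is :: "('a \<times> 'a) set \<Rightarrow> ('a \<Rightarrow> 'a \<Rightarrow> real) \<Rightarrow> 'a \<Rightarrow> 'a \<Rightarrow> 'a \<Rightarrow> 'a" where
  "Is E w s t x = (THE v. sdom E w s t v x \<and>
      (\<forall>u. sdom E w s t u x \<and> u \<noteq> v \<longrightarrow> sdom E w s t u v))"

definition It :: "('a \<times> 'a) set \<Rightarrow> ('a \<Rightarrow> 'a \<Rightarrow> real) \<Rightarrow> 'a \<Rightarrow> 'a \<Rightarrow> 'a \<Rightarrow> 'a" where
  "It E w s t x = (THE v. tdom E w s t v x \<and>
      (\<forall>u. tdom E w s t u x \<and> u \<noteq> v \<longrightarrow> tdom E w s t u v))"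

definition Cset :: "('a \<times> 'a) set \<Rightarrow> ('a \<Rightarrow> 'a \<Rightarrow> real) \<Rightarrow> 'a \<Rightarrow> 'a \<Rightarrow> 'a \<Rightarrow> 'a set" where
  "Cset E w s t x = {v. anc E w s t (Is E w s t x) v \<and> anc E w s t v x}"

definition gfun :: "('a \<times> 'a) set \<Rightarrow> ('a \<Rightarrow> 'a \<Rightarrow> real) \<Rightarrow> 'a \<Rightarrow> 'a \<Rightarrow> 'a \<Rightarrow> 'a \<Rightarrow> ereal" where
  "gfun E w s t x y = (if y \<in> Cset E w s t x \<and> anc E w s t x (It E w s t y)
                       then ereal (gdist E w y x) else \<infinity>)"

definition gstar :: "('a \<times> 'a) set \<Rightarrow> ('a \<Rightarrow> 'a \<Rightarrow> real) \<Rightarrow> 'a \<Rightarrow> 'a \<Rightarrow> 'a \<Rightarrow> ereal" where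
  "gstar E w s t x = (INF y \<in> DV E w s t. gfun E w s t x y)"

definition int_disjoint :: "'a list \<Rightarrow> 'a list \<Rightarrow> bool" where
  "int_disjoint P Q \<longleftrightarrow> set P \<inter> set Q \<subseteq> {hd P, last P} \<inter> {hd Q, last Q}"

end

theory Submission
  imports Defs
begin



lemma walk_succ:
  "is_walk A p u v \<longleftrightarrow> p \<noteq> [] \<and> hd p = u \<and> last p = v \<and> successively (\<lambda>a b. (a,b)\<in>A) p"
  unfolding is_walk_def successively_conv_nth by (auto simp: less_diff_conv)

lemma succ_trancl:
  assumes "successively (\<lambda>a b. (a,b)\<in>A) p" "i < j" "j < length p"
  shows "(p!i, p!j) \<in> A\<^sup>+"
  using assms(2,3)
proof (induction j)
  case 0 then show ?case by simp
next
  case (Suc j)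
  have e: "(p!j, p!Suc j) \<in> A" using successively_nth[OF assms(1)] Suc.prems by simp
  show ?case
  proof (cases "i = j")
    case True then show ?thesis using e by auto
  next
    case False
    then have "(p!i, p!j) \<in> A\<^sup>+" using Suc by auto
    then show ?thesis using e by auto
  qed
qed

lemma walk_distinct:
  assumes "acyclic A" "is_walk A p u v" shows "distinct p"
proof -
  have s: "successively (\<lambda>a b. (a,b)\<in>A) p" using assms(2) unfolding walk_succ by simp
  show ?thesis unfolding distinct_conv_nth
  proof (intro allI impI)
    fix i j assume h: "i < length p" "j < length p" "i \<noteq> j"
    show "p!i \<noteq> p!j"
    proof
      assume eq: "p!i = p!j"
      have "i < j \<or> j < i" using h(3) by arith
      then show False
      proof
        assume "i < j" then have "(p!i,p!j) \<in> A\<^sup>+" using succ_trancl[OF s] h(2) by blast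
        then show False using eq assms(1) by (metis acyclic_def)
      next
        assume "j < i" then have "(p!j,p!i) \<in> A\<^sup>+" using succ_trancl[OF s] h(1) by blast
        then show False using eq assms(1) by (metis acyclic_def)
      qed
    qed
  qed
qed

lemma path_walk_acyc: "acyclic A \<Longrightarrow> is_path A p u v \<longleftrightarrow> is_walk A p u v"
  unfolding is_path_def using walk_distinct[of A p u v] by auto

lemma path_nth_trancl:
  assumes "is_path A p u v" "i < j" "j < length p"
  shows "(p!i, p!j) \<in> A\<^sup>+"
proof -
  have "successively (\<lambda>a b. (a,b)\<in>A) p" using assms(1) unfolding is_path_def walk_succ by simp
  then show ?thesis using succ_trancl assms(2,3) by blast
qed

lemma path_mem:
  assumes "is_path A p u v" "z \<in> set p"
  shows "(u,z) \<in> A\<^sup>* \<and> (z,v) \<in> A\<^sup>*"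
proof -
  obtain k where k: "k < length p" "p!k = z" using assms(2) by (auto simp: in_set_conv_nth)
  have ne: "p \<noteq> []" and hu: "hd p = u" and lv: "last p = v" using assms(1) unfolding is_path_def is_walk_def by auto
  have u: "p!0 = u" using hu ne by (simp add: hd_conv_nth)
  have v: "p!(length p - 1) = v" using lv ne by (simp add: last_conv_nth)
  have 1: "(u,z) \<in> A\<^sup>*"
  proof (cases "k = 0")
    case True then show ?thesis using u k by auto
  next
    case False then have "(p!0, p!k) \<in> A\<^sup>+" using path_nth_trancl[OF assms(1), of 0 k] k by simp
    then show ?thesis using u k by auto
  qed
  have 2: "(z,v) \<in> A\<^sup>*"
  proof (cases "k = length p - 1")
    case True then show ?thesis using v k by auto
  next
    case False then have "k < length p - 1" using k by linarith
    then have "(p!k, p!(length p - 1)) \<in> A\<^sup>+" using path_nth_trancl[OF assms(1), of k "length p - 1"] k by simp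
    then show ?thesis using v k by auto
  qed
  show ?thesis using 1 2 by auto
qed

lemma path_mem_trancl1:
  assumes "is_path A p u v" "z \<in> set p" "z \<noteq> u" shows "(u,z) \<in> A\<^sup>+"
  using path_mem[OF assms(1,2)] assms(3) by (auto simp: rtrancl_eq_or_trancl)

lemma path_mem_trancl2:
  assumes "is_path A p u v" "z \<in> set p" "z \<noteq> v" shows "(z,v) \<in> A\<^sup>+"
  using path_mem[OF assms(1,2)] assms(3) by (auto simp: rtrancl_eq_or_trancl)

lemma rtrancl_path:
  assumes "acyclic A" "(u,v) \<in> A\<^sup>*" shows "\<exists>p. is_path A p u v"
  using assms(2)
proof (induction rule: converse_rtrancl_induct)
  case base
  then show ?case by (rule exI[of _ "[v]"]) (simp add: is_path_def is_walk_def)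
next
  case (step y z)
  then obtain p where p: "is_path A p z v" by blast
  then have "is_walk A (y#p) y v" using step(1)
    unfolding is_path_def walk_succ by (auto simp: successively_Cons)
  then show ?case using path_walk_acyc[OF assms(1)] by blast
qed

lemma path_append:
  assumes "acyclic A" "is_path A p u m" "is_path A q m v"
  shows "is_path A (p @ tl q) u v"
proof -
  have a: "p \<noteq> []" "hd p = u" "last p = m" "successively (\<lambda>a b. (a,b)\<in>A) p"
    using assms(2) unfolding is_path_def walk_succ by auto
  have b: "q \<noteq> []" "hd q = m" "last q = v" "successively (\<lambda>a b. (a,b)\<in>A) q"
    using assms(3) unfolding is_path_def walk_succ by auto
  obtain q' where q: "q = m # q'" using b by (cases q) auto
  have "successively (\<lambda>a b. (a,b)\<in>A) (p @ q')"
    using a b q by (auto simp: successively_append_iff successively_Cons)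
  moreover have "last (p @ q') = v" using a b q by (cases "q' = []") auto
  ultimately have "is_walk A (p @ tl q) u v" using a q unfolding walk_succ by auto
  then show ?thesis using path_walk_acyc[OF assms(1)] by blast
qed

lemma path_drop:
  assumes "is_path A p u v" "i < length p"
  shows "is_path A (drop i p) (p!i) v"
  using assms unfolding is_path_def is_walk_def
  by (auto simp: hd_drop_conv_nth last_drop)

lemma path_take:
  assumes "is_path A p u v" "i < length p"
  shows "is_path A (take (Suc i) p) u (p!i)"
  using assms unfolding is_path_def is_walk_def
  by (auto simp: last_conv_nth hd_conv_nth)

lemma path_rev:
  "is_path A p u v \<longleftrightarrow> is_path (A\<inverse>) (rev p) v u"
  unfolding is_path_def walk_succ by (auto simp: hd_rev last_rev)




lemma max_elem:
  assumes "finite A" "acyclic A" "v \<in> S"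
  shows "\<exists>z\<in>S. \<forall>y\<in>S. (z,y) \<notin> A\<^sup>+"
proof -
  have "acyclic (A\<^sup>+)" using assms(2) unfolding acyclic_def by simp
  then have wf: "wf ((A\<^sup>+)\<inverse>)" using assms(1) by (intro finite_acyclic_wf_converse) simp_all
  obtain z where "z \<in> S" "\<And>y. (y,z) \<in> (A\<^sup>+)\<inverse> \<Longrightarrow> y \<notin> S" using wfE_min[OF wf assms(3)] by metis
  then show ?thesis by auto
qed

lemma path_hd_mem: "is_path A p u v \<Longrightarrow> u \<in> set p"
  unfolding is_path_def is_walk_def by (metis hd_in_set)
lemma path_last_mem: "is_path A p u v \<Longrightarrow> v \<in> set p"
  unfolding is_path_def is_walk_def by (metis last_in_set)

lemma path_comparable:
  assumes "is_path A P a b" "u \<in> set P" "v \<in> set P"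
  shows "u = v \<or> (u,v) \<in> A\<^sup>+ \<or> (v,u) \<in> A\<^sup>+"
proof -
  obtain i where i: "i < length P" "P!i = u" using assms(2) by (auto simp: in_set_conv_nth)
  obtain j where j: "j < length P" "P!j = v" using assms(3) by (auto simp: in_set_conv_nth)
  have "i = j \<or> i < j \<or> j < i" by arith
  then show ?thesis using path_nth_trancl[OF assms(1)] i j by blast
qed

lemma acyc_no_cycle: "acyclic A \<Longrightarrow> (u,v) \<in> A\<^sup>+ \<Longrightarrow> (v,u) \<in> A\<^sup>* \<Longrightarrow> False"
  by (metis acyclic_def rtrancl_eq_or_trancl trancl_trans)

definition gdom :: "('a \<times> 'a) set \<Rightarrow> 'a \<Rightarrow> 'a \<Rightarrow> 'a \<Rightarrow> bool" where
  "gdom A r v y \<longleftrightarrow> v \<noteq> y \<and> (\<forall>p. is_path A p r y \<longrightarrow> v \<in> set p)"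

lemma idom_unique:
  assumes fin: "finite A" and acyc: "acyclic A" and rx: "r \<noteq> x" "(r,x) \<in> A\<^sup>*"
  shows "\<exists>!v. gdom A r v x \<and> (\<forall>u. gdom A r u x \<and> u \<noteq> v \<longrightarrow> gdom A r u v)"
proof (rule ex_ex1I)
  obtain P0 where P0: "is_path A P0 r x" using rtrancl_path[OF acyc rx(2)] by blast
  have rD: "gdom A r r x" unfolding gdom_def using rx(1) by (auto intro: path_hd_mem)
  obtain v0 where v0: "gdom A r v0 x" "\<And>y. gdom A r y x \<Longrightarrow> (v0,y) \<notin> A\<^sup>+"
    using max_elem[OF fin acyc, of r "{v. gdom A r v x}"] rD by auto
  have v0P: "v0 \<in> set P0" using v0(1) P0 unfolding gdom_def by blast
  obtain i where i: "i < length P0" "P0!i = v0" using v0P by (auto simp: in_set_conv_nth)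
  have Q0: "is_path A (drop i P0) v0 x" using path_drop[OF P0 i(1)] i by simp
  have "\<forall>u. gdom A r u x \<and> u \<noteq> v0 \<longrightarrow> gdom A r u v0"
  proof (intro allI impI)
    fix u assume u: "gdom A r u x \<and> u \<noteq> v0"
    show "gdom A r u v0" unfolding gdom_def
    proof (intro conjI allI impI)
      show "u \<noteq> v0" using u by simp
      fix R assume R: "is_path A R r v0"
      have "is_path A (R @ tl (drop i P0)) r x" using path_append[OF acyc R Q0] .
      then have "u \<in> set (R @ tl (drop i P0))" using u unfolding gdom_def by blast
      moreover have "u \<in> set (tl (drop i P0)) \<Longrightarrow> False"
      proof -
        assume "u \<in> set (tl (drop i P0))"
        then have "u \<in> set (drop i P0)" by (cases "drop i P0") auto
        then have "(v0,u) \<in> A\<^sup>+" using path_mem_trancl1[OF Q0] u by blast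
        then show False using v0(2) u by blast
      qed
      ultimately show "u \<in> set R" by auto
    qed
  qed
  then show "\<exists>v. gdom A r v x \<and> (\<forall>u. gdom A r u x \<and> u \<noteq> v \<longrightarrow> gdom A r u v)" using v0(1) by blast
next
  fix v1 v2
  assume h1: "gdom A r v1 x \<and> (\<forall>u. gdom A r u x \<and> u \<noteq> v1 \<longrightarrow> gdom A r u v1)"
     and h2: "gdom A r v2 x \<and> (\<forall>u. gdom A r u x \<and> u \<noteq> v2 \<longrightarrow> gdom A r u v2)"
  obtain P0 where P0: "is_path A P0 r x" using rtrancl_path[OF acyc rx(2)] by blast
  show "v1 = v2"
  proof (rule ccontr)
    assume ne: "v1 \<noteq> v2"
    have g21: "gdom A r v2 v1" using h1 h2 ne by blast
    have g12: "gdom A r v1 v2" using h1 h2 ne by blast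
    have "v1 \<in> set P0" using h1 P0 unfolding gdom_def by blast
    then have "(r,v1) \<in> A\<^sup>*" using path_mem[OF P0] by simp
    then obtain R1 where R1: "is_path A R1 r v1" using rtrancl_path[OF acyc] by blast
    have "v2 \<in> set P0" using h2 P0 unfolding gdom_def by blast
    then have "(r,v2) \<in> A\<^sup>*" using path_mem[OF P0] by simp
    then obtain R2 where R2: "is_path A R2 r v2" using rtrancl_path[OF acyc] by blast
    have "v2 \<in> set R1" using g21 R1 unfolding gdom_def by blast
    then have "(v2,v1) \<in> A\<^sup>+" using path_mem_trancl2[OF R1] ne by blast
    moreover have "v1 \<in> set R2" using g12 R2 unfolding gdom_def by blast
    then have "(v1,v2) \<in> A\<^sup>+" using path_mem_trancl2[OF R2] ne by blast
    ultimately show False using acyc_no_cycle[OF acyc] trancl_into_rtrancl by metis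
  qed
qed

lemma last_meet:
  assumes "set Q \<inter> set R \<noteq> {}"
  shows "\<exists>i j. i < length Q \<and> j < length R \<and> Q!i = R!j \<and> set (drop i Q) \<inter> set (drop j R) = {Q!i}"
proof -
  define I where "I = {i. i < length Q \<and> Q!i \<in> set R}"
  have fI: "finite I" unfolding I_def by simp
  have neI: "I \<noteq> {}" using assms unfolding I_def by (auto simp: in_set_conv_nth)
  define i where "i = Max I"
  have iI: "i \<in> I" using Max_in[OF fI neI] i_def by simp
  have imax: "\<And>k. k \<in> I \<Longrightarrow> k \<le> i" using Max_ge[OF fI] i_def by simp
  obtain j where j: "j < length R" "R!j = Q!i" using iI unfolding I_def by (auto simp: in_set_conv_nth)
  have il: "i < length Q" using iI I_def by simp
  have "set (drop i Q) \<inter> set (drop j R) \<subseteq> {Q!i}"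
  proof
    fix e assume e: "e \<in> set (drop i Q) \<inter> set (drop j R)"
    then obtain k where k: "k < length (drop i Q)" "drop i Q ! k = e" by (auto simp: in_set_conv_nth)
    have "e \<in> set R" using e by (meson IntD2 in_set_dropD)
    then have "i + k \<in> I" using k unfolding I_def by auto
    then have "k = 0" using imax by fastforce
    then show "e \<in> {Q!i}" using k il by simp
  qed
  moreover have "Q!i \<in> set (drop i Q)" using il by (metis Cons_nth_drop_Suc list.set_intros(1))
  moreover have "Q!i \<in> set (drop j R)" using j by (metis Cons_nth_drop_Suc list.set_intros(1))
  ultimately have "set (drop i Q) \<inter> set (drop j R) = {Q!i}" by blast
  then show ?thesis using il j by (intro exI[of _ i] exI[of _ j]) simp
qed




definition sepv :: "('a \<times> 'a) set \<Rightarrow> 'a \<Rightarrow> 'a \<Rightarrow> 'a \<Rightarrow> bool" where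
  "sepv A p q x \<longleftrightarrow> (\<exists>v. v \<noteq> x \<and> (\<forall>P. is_path A P p x \<longrightarrow> v \<in> set P) \<and> (\<forall>P. is_path A P q x \<longrightarrow> v \<in> set P))"

lemma sepv_sym: "sepv A p q x \<longleftrightarrow> sepv A q p x"
  unfolding sepv_def by blast

definition reach :: "('a \<times> 'a) set \<Rightarrow> 'a \<Rightarrow> 'a set" where
  "reach A p = {v. (p,v) \<in> A\<^sup>*}"

lemma finite_reach: assumes "finite A" shows "finite (reach A p)"
proof -
  have "reach A p \<subseteq> insert p (Range A)"
    unfolding reach_def by (auto elim: rtranclE)
  then show ?thesis using assms finite_subset by (metis finite_Range finite_insert)
qed

lemma path_second:
  assumes "is_path A P p x" "p \<noteq> x"
  shows "Suc 0 < length P \<and> (p, P!Suc 0) \<in> A \<and> is_path A (drop (Suc 0) P) (P!Suc 0) x"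
proof -
  have ne: "P \<noteq> []" "hd P = p" "last P = x" using assms(1) unfolding is_path_def is_walk_def by auto
  have l: "Suc 0 < length P"
  proof (rule ccontr)
    assume "\<not> Suc 0 < length P"
    then have "length P = 1" using ne by (cases P) auto
    then have "hd P = last P" by (cases P) auto
    then show False using ne assms(2) by simp
  qed
  have "(P!0, P!Suc 0) \<in> A" using assms(1) l unfolding is_path_def is_walk_def by auto
  moreover have "P!0 = p" using ne by (simp add: hd_conv_nth)
  ultimately show ?thesis using l path_drop[OF assms(1) l] by simp
qed

lemma path_cons:
  assumes "acyclic A" "(p,p') \<in> A" "is_path A P p' x"
  shows "is_path A (p#P) p x"
proof -
  have "is_walk A (p#P) p x" using assms(2,3) unfolding is_path_def walk_succ
    by (auto simp: successively_Cons)
  then show ?thesis using path_walk_acyc[OF assms(1)] by blast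
qed

lemma fan_step:
  assumes fin: "finite A" and acyc: "acyclic A"
    and IH: "\<And>p' q'. card (reach A p') + card (reach A q') < card (reach A p) + card (reach A q)
        \<Longrightarrow> p' \<noteq> q' \<Longrightarrow> (p',x) \<in> A\<^sup>* \<Longrightarrow> (q',x) \<in> A\<^sup>* \<Longrightarrow> \<not> sepv A p' q' x
        \<Longrightarrow> \<exists>P Q. is_path A P p' x \<and> is_path A Q q' x \<and> set P \<inter> set Q = {x}"
    and px: "(p,x) \<in> A\<^sup>*" and qx: "(q,x) \<in> A\<^sup>*" and ns: "\<not> sepv A p q x"
    and qp: "(q,p) \<notin> A\<^sup>*"
  shows "\<exists>P Q. is_path A P p x \<and> is_path A Q q x \<and> set P \<inter> set Q = {x}"
proof -
  obtain Q0 where Q0: "is_path A Q0 q x" using rtrancl_path[OF acyc qx] by blast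
  obtain P0 where P0: "is_path A P0 p x" using rtrancl_path[OF acyc px] by blast
  have pQ: "\<And>Q. is_path A Q q x \<Longrightarrow> p \<notin> set Q" using qp path_mem by metis
  show ?thesis
  proof (cases "p = x")
    case True
    have "is_path A [x] p x" using True unfolding is_path_def is_walk_def by simp
    moreover have "set [x] \<inter> set Q0 = {x}" using path_last_mem[OF Q0] by auto
    ultimately show ?thesis using Q0 by blast
  next
    case pnx: False
    show ?thesis
    proof (cases "q = x")
      case True
      have "is_path A [x] q x" using True unfolding is_path_def is_walk_def by simp
      moreover have "set P0 \<inter> set [x] = {x}" using path_last_mem[OF P0] by auto
      ultimately show ?thesis using P0 by blast
    next
      case qnx: False
      show ?thesis
      proof (cases "(p,x) \<in> A")
        case True
        have "is_path A [p,x] p x" using True pnx unfolding is_path_def is_walk_def by simp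
        moreover have "set [p,x] \<inter> set Q0 = {x}" using path_last_mem[OF Q0] pQ[OF Q0] by auto
        ultimately show ?thesis using Q0 by blast
      next
        case pxA: False
        show ?thesis
        proof (cases "\<exists>p'. (p,p') \<in> A \<and> (p',x) \<in> A\<^sup>* \<and> p' \<noteq> q \<and> \<not> sepv A p' q x")
          case True
          then obtain p' where p': "(p,p') \<in> A" "(p',x) \<in> A\<^sup>*" "p' \<noteq> q" "\<not> sepv A p' q x" by blast
          have sub: "reach A p' \<subseteq> reach A p" using p'(1) unfolding reach_def
            by (auto intro: converse_rtrancl_into_rtrancl)
          have "p \<notin> reach A p'"
          proof
            assume "p \<in> reach A p'"
            then have "(p',p) \<in> A\<^sup>*" unfolding reach_def by simp
            then show False using acyc_no_cycle[OF acyc, of p p'] p'(1) by blast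
          qed
          moreover have "p \<in> reach A p" unfolding reach_def by simp
          ultimately have "reach A p' \<subset> reach A p" using sub by blast
          then have "card (reach A p') < card (reach A p)" using finite_reach[OF fin] by (simp add: psubset_card_mono)
          then obtain P' Q where PQ: "is_path A P' p' x" "is_path A Q q x" "set P' \<inter> set Q = {x}"
            using IH[of p' q] p' qx by auto
          have h1: "is_path A (p#P') p x" using path_cons[OF acyc p'(1) PQ(1)] .
          have h2: "set (p#P') \<inter> set Q = {x}" using PQ(3) pQ[OF PQ(2)] by auto
          show ?thesis by (intro exI conjI, rule h1, rule PQ(2), rule h2)
        next
          case noext: False
          define U where "U = {v. v \<noteq> x \<and> (\<forall>Q. is_path A Q q x \<longrightarrow> v \<in> set Q) \<and>
               (\<exists>p'. (p,p') \<in> A \<and> (p',x) \<in> A\<^sup>* \<and> (\<forall>P. is_path A P p' x \<longrightarrow> v \<in> set P))}"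
          have K: "\<exists>u\<in>U. \<forall>P. is_path A P p' x \<longrightarrow> u \<in> set P"
            if h: "(p,p') \<in> A" "(p',x) \<in> A\<^sup>*" for p'
          proof (cases "p' = q")
            case True
            have "q \<in> U" using qnx h True by (auto simp: U_def intro: path_hd_mem)
            then show ?thesis using True by (intro bexI[of _ q]) (auto intro: path_hd_mem)
          next
            case ne: False
            then have "sepv A p' q x" using noext h by blast
            then obtain v where v: "v \<noteq> x" "\<forall>P. is_path A P p' x \<longrightarrow> v \<in> set P" "\<forall>P. is_path A P q x \<longrightarrow> v \<in> set P"
              unfolding sepv_def by blast
            have "v \<in> U" unfolding U_def using v h by blast
            then show ?thesis using v(2) by blast
          qed
          have ps: "Suc 0 < length P0 \<and> (p, P0!Suc 0) \<in> A \<and> is_path A (drop (Suc 0) P0) (P0!Suc 0) x"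
            using path_second[OF P0 pnx] .
          have "is_path A (drop (Suc 0) P0) (P0!Suc 0) x" using ps by blast
          then have "(P0!Suc 0, x) \<in> A\<^sup>*" using path_mem path_hd_mem by fast
          then obtain u0 where "u0 \<in> U" using K[of "P0!Suc 0"] ps by blast
          then obtain vs where vs: "vs \<in> U" "\<And>y. y \<in> U \<Longrightarrow> (vs,y) \<notin> A\<^sup>+"
            using max_elem[OF fin acyc, of u0 U] by blast
          have "sepv A p q x" unfolding sepv_def
          proof (intro exI[of _ vs] conjI allI impI)
            show "vs \<noteq> x" using vs(1) unfolding U_def by blast
            show "\<And>Q. is_path A Q q x \<Longrightarrow> vs \<in> set Q" using vs(1) unfolding U_def by blast
            fix P assume P: "is_path A P p x"
            have ps: "Suc 0 < length P \<and> (p, P!Suc 0) \<in> A \<and> is_path A (drop (Suc 0) P) (P!Suc 0) x"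
              using path_second[OF P pnx] .
            define p' where "p' = P!Suc 0"
            have dP: "is_path A (drop (Suc 0) P) p' x" using ps p'_def by simp
            have "(p',x) \<in> A\<^sup>*" using path_mem[OF dP path_hd_mem[OF dP]] by simp
            moreover have "(p,p') \<in> A" using ps p'_def by simp
            ultimately obtain u where u: "u \<in> U" "\<forall>P. is_path A P p' x \<longrightarrow> u \<in> set P" using K[of p'] by blast
            have uP: "u \<in> set (drop (Suc 0) P)" using u(2) dP by blast
            have sdP: "set (drop (Suc 0) P) \<subseteq> set P" by (rule set_drop_subset)
            have uQ: "u \<in> set Q0" using u(1) Q0 unfolding U_def by blast
            have vQ: "vs \<in> set Q0" using vs(1) Q0 unfolding U_def by blast
            have "u = vs \<or> (u,vs) \<in> A\<^sup>+ \<or> (vs,u) \<in> A\<^sup>+" using path_comparable[OF Q0 uQ vQ] .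
            moreover have "(vs,u) \<notin> A\<^sup>+" using vs(2) u(1) by blast
            moreover have "(u,vs) \<in> A\<^sup>+ \<Longrightarrow> vs \<in> set P"
            proof -
              assume uv: "(u,vs) \<in> A\<^sup>+"
              obtain i where i: "i < length Q0" "Q0!i = u" using uQ by (auto simp: in_set_conv_nth)
              have R: "is_path A (take (Suc i) Q0) q u" using path_take[OF Q0 i(1)] i by simp
              obtain k where k: "k < length (drop (Suc 0) P)" "drop (Suc 0) P ! k = u" using uP by (auto simp: in_set_conv_nth)
              have S: "is_path A (drop k (drop (Suc 0) P)) u x" using path_drop[OF dP k(1)] k by simp
              have "is_path A (take (Suc i) Q0 @ tl (drop k (drop (Suc 0) P))) q x"
                using path_append[OF acyc R S] .
              then have "vs \<in> set (take (Suc i) Q0 @ tl (drop k (drop (Suc 0) P)))" using vs(1) unfolding U_def by blast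
              moreover have "vs \<notin> set (take (Suc i) Q0)"
              proof
                assume "vs \<in> set (take (Suc i) Q0)"
                then have "(vs,u) \<in> A\<^sup>*" using path_mem[OF R] by blast
                then show False using acyc_no_cycle[OF acyc uv] by blast
              qed
              ultimately have "vs \<in> set (tl (drop k (drop (Suc 0) P)))" by simp
              then have "vs \<in> set (drop k (drop (Suc 0) P))" by (cases "drop k (drop (Suc 0) P)") auto
              then show "vs \<in> set P" using sdP set_drop_subset by fastforce
            qed
            ultimately show "vs \<in> set P" using uP sdP by blast
          qed
          then show ?thesis using ns by blast
        qed
      qed
    qed
  qed
qed

lemma fan:
  assumes fin: "finite A" and acyc: "acyclic A"
  shows "p \<noteq> q \<Longrightarrow> (p,x) \<in> A\<^sup>* \<Longrightarrow> (q,x) \<in> A\<^sup>* \<Longrightarrow> \<not> sepv A p q x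
        \<Longrightarrow> \<exists>P Q. is_path A P p x \<and> is_path A Q q x \<and> set P \<inter> set Q = {x}"
proof (induction "card (reach A p) + card (reach A q)" arbitrary: p q rule: less_induct)
  case less
  show ?case
  proof (cases "(q,p) \<in> A\<^sup>*")
    case False
    show ?thesis by (rule fan_step[OF fin acyc less.hyps less.prems(2,3,4) False])
  next
    case True
    have np: "(p,q) \<notin> A\<^sup>*"
    proof
      assume "(p,q) \<in> A\<^sup>*"
      then have "(p,q) \<in> A\<^sup>+" using less.prems(1) by (auto simp: rtrancl_eq_or_trancl)
      then show False using acyc_no_cycle[OF acyc _ True] by blast
    qed
    have "\<exists>P Q. is_path A P q x \<and> is_path A Q p x \<and> set P \<inter> set Q = {x}"
    proof (rule fan_step[OF fin acyc _ less.prems(3,2) _ np])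
      show "\<not> sepv A q p x" using less.prems(4) sepv_sym by metis
      fix p' q'
      assume "card (reach A p') + card (reach A q') < card (reach A q) + card (reach A p)"
        "p' \<noteq> q'" "(p',x) \<in> A\<^sup>*" "(q',x) \<in> A\<^sup>*" "\<not> sepv A p' q' x"
      then show "\<exists>P Q. is_path A P p' x \<and> is_path A Q q' x \<and> set P \<inter> set Q = {x}"
        using less.hyps[of p' q'] by simp
    qed
    then show ?thesis by blast
  qed
qed




lemma wl_single: "walk_len w [a] = 0" by (simp add: walk_len_def)

lemma wl_cons2: "walk_len w (a#b#r) = w a b + walk_len w (b#r)"
  unfolding walk_len_def by (simp add: sum.lessThan_Suc_shift del: sum.lessThan_Suc)

lemma wl_app: "walk_len w (xs @ y # ys) = walk_len w (xs @ [y]) + walk_len w (y # ys)"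
proof (induction xs)
  case Nil then show ?case by (simp add: wl_single)
next
  case (Cons a xs)
  show ?case
  proof (cases xs)
    case Nil then show ?thesis by (simp add: wl_cons2 wl_single)
  next
    case (Cons b xs')
    then show ?thesis using Cons.IH by (simp add: wl_cons2)
  qed
qed

lemma walk_append:
  assumes "is_walk A p u m" "is_walk A q m v"
  shows "is_walk A (p @ tl q) u v"
proof -
  have a: "p \<noteq> []" "hd p = u" "last p = m" "successively (\<lambda>a b. (a,b)\<in>A) p"
    using assms(1) unfolding walk_succ by auto
  have b: "q \<noteq> []" "hd q = m" "last q = v" "successively (\<lambda>a b. (a,b)\<in>A) q"
    using assms(2) unfolding walk_succ by auto
  obtain q' where q: "q = m # q'" using b by (cases q) auto
  have "successively (\<lambda>a b. (a,b)\<in>A) (p @ q')"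
    using a b q by (auto simp: successively_append_iff successively_Cons)
  moreover have "last (p @ q') = v" using a b q by (cases "q' = []") auto
  ultimately show "is_walk A (p @ tl q) u v" using a q unfolding walk_succ by auto
qed

lemma wl_append:
  assumes "is_walk A p u m" "is_walk A q m v"
  shows "walk_len w (p @ tl q) = walk_len w p + walk_len w q"
proof -
  have a: "p \<noteq> []" "last p = m" using assms(1) unfolding is_walk_def by auto
  have b: "q \<noteq> []" "hd q = m" using assms(2) unfolding is_walk_def by auto
  obtain q' where q: "q = m # q'" using b by (cases q) auto
  have p: "p = butlast p @ [m]" using a by (metis append_butlast_last_id)
  have e: "p @ tl q = butlast p @ m # q'" using q p by (metis append.assoc append_Cons append_Nil list.sel(3))
  have "walk_len w (p @ tl q) = walk_len w (butlast p @ m # q')" using e by simp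
  also have "\<dots> = walk_len w (butlast p @ [m]) + walk_len w (m # q')" by (rule wl_app)
  also have "butlast p @ [m] = p" using p by simp
  finally show ?thesis using q by simp
qed

context
  fixes V E w s t
  assumes G: "simple_graph V E w" and sV: "s \<in> V" and tV: "t \<in> V"
begin

lemma EV: "(a,b) \<in> E \<Longrightarrow> a \<in> V \<and> b \<in> V"
  using G unfolding simple_graph_def by blast

lemma wpos: "(a,b) \<in> E \<Longrightarrow> w a b > 0"
  using G unfolding simple_graph_def by blast

lemma conn: "u \<in> V \<Longrightarrow> v \<in> V \<Longrightarrow> \<exists>p. is_walk E p u v"
  using G unfolding simple_graph_def by blast

lemma wl_nonneg: "is_walk E p u v \<Longrightarrow> walk_len w p \<ge> 0"
  unfolding walk_len_def is_walk_def
  by (intro sum_nonneg) (auto intro: less_imp_le[OF wpos])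

lemma gd_le: "is_walk E p u v \<Longrightarrow> gdist E w u v \<le> walk_len w p"
  unfolding gdist_def
  by (rule cInf_lower) (auto intro!: bdd_belowI[of _ 0] wl_nonneg)

lemma gd_ge: "is_walk E p0 u v \<Longrightarrow> (\<And>p. is_walk E p u v \<Longrightarrow> c \<le> walk_len w p) \<Longrightarrow> c \<le> gdist E w u v"
  unfolding gdist_def by (rule cInf_greatest) auto

lemma tri:
  assumes "is_walk E p0 u m" "is_walk E q0 m v"
  shows "gdist E w u v \<le> gdist E w u m + gdist E w m v"
proof -
  have 1: "gdist E w u v \<le> walk_len w p + walk_len w q" if "is_walk E p u m" "is_walk E q m v" for p q
    using gd_le[OF walk_append[OF that]] wl_append[OF that, of w] by simp
  have 2: "gdist E w u v - walk_len w q \<le> gdist E w u m" if "is_walk E q m v" for q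
  proof (rule gd_ge[OF assms(1)])
    fix p assume "is_walk E p u m" then show "gdist E w u v - walk_len w q \<le> walk_len w p"
      using 1[OF _ that] by force
  qed
  have "gdist E w u v - gdist E w u m \<le> gdist E w m v"
  proof (rule gd_ge[OF assms(2)])
    fix q assume "is_walk E q m v" then show "gdist E w u v - gdist E w u m \<le> walk_len w q"
      using 2 by force
  qed
  then show ?thesis by simp
qed

lemma tri_V: "u \<in> V \<Longrightarrow> m \<in> V \<Longrightarrow> v \<in> V \<Longrightarrow> gdist E w u v \<le> gdist E w u m + gdist E w m v"
  using conn tri by metis

lemma edge_d: "(a,b) \<in> E \<Longrightarrow> gdist E w a b \<le> w a b"
proof -
  assume e: "(a,b) \<in> E"
  have "is_walk E [a,b] a b" using e unfolding is_walk_def by simp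
  from gd_le[OF this] show ?thesis by (simp add: wl_cons2 wl_single)
qed

lemma sp_prefix:
  assumes sp: "shortest_path E w p s t" and j: "j < length p"
  shows "gdist E w s (p!j) = walk_len w (take (Suc j) p)"
proof -
  have P: "is_path E p s t" using sp unfolding shortest_path_def by simp
  have pre: "is_walk E (take (Suc j) p) s (p!j)" using path_take[OF P j] unfolding is_path_def by simp
  have suf: "is_walk E (drop j p) (p!j) t" using path_drop[OF P j] unfolding is_path_def by simp
  have eq: "walk_len w p = walk_len w (take (Suc j) p) + walk_len w (drop j p)"
  proof -
    have "p = take j p @ p!j # drop (Suc j) p" using j by (simp add: id_take_nth_drop)
    then have "walk_len w p = walk_len w (take j p @ [p!j]) + walk_len w (p!j # drop (Suc j) p)"
      using wl_app by metis
    then show ?thesis using j by (simp add: take_Suc_conv_app_nth Cons_nth_drop_Suc)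
  qed
  have "walk_len w p = gdist E w s t" using sp unfolding shortest_path_def by simp
  also have "\<dots> \<le> gdist E w s (p!j) + gdist E w (p!j) t" using tri[OF pre suf] .
  also have "\<dots> \<le> gdist E w s (p!j) + walk_len w (drop j p)" using gd_le[OF suf] by simp
  finally have "walk_len w (take (Suc j) p) \<le> gdist E w s (p!j)" using eq by simp
  moreover have "gdist E w s (p!j) \<le> walk_len w (take (Suc j) p)" using gd_le[OF pre] .
  ultimately show ?thesis by simp
qed

lemma arc_prop:
  assumes "(u,v) \<in> DA E w s t"
  shows "(u,v) \<in> E \<and> gdist E w s v = gdist E w s u + w u v"
proof -
  obtain p i where pi: "shortest_path E w p s t" "i < length p - 1" "u = p!i" "v = p!Suc i"
    using assms unfolding DA_def by blast
  have P: "is_path E p s t" using pi(1) unfolding shortest_path_def by simp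
  have e: "(u,v) \<in> E" using P pi unfolding is_path_def is_walk_def by auto
  have "gdist E w s v = walk_len w (take (Suc (Suc i)) p)" using sp_prefix[OF pi(1), of "Suc i"] pi by simp
  also have "take (Suc (Suc i)) p = take i p @ [p!i, p!Suc i]" using pi(2)
    by (simp add: take_Suc_conv_app_nth)
  also have "walk_len w (take i p @ [p!i, p!Suc i]) = walk_len w (take i p @ [p!i]) + w (p!i) (p!Suc i)"
    using wl_app[of w "take i p" "p!i" "[p!Suc i]"] by (simp add: wl_cons2 wl_single)
  also have "take i p @ [p!i] = take (Suc i) p" using pi(2) by (simp add: take_Suc_conv_app_nth)
  also have "walk_len w (take (Suc i) p) = gdist E w s u" using sp_prefix[OF pi(1), of i] pi by simp
  finally show ?thesis using e pi by simp
qed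

lemma DA_E: "DA E w s t \<subseteq> E" using arc_prop by auto

lemma finite_DA: "finite (DA E w s t)"
proof -
  have sub: "DA E w s t \<subseteq> V \<times> V" using DA_E EV by auto
  have "finite V" using G unfolding simple_graph_def by simp
  then have "finite (V \<times> V)" by simp
  then show ?thesis using finite_subset[OF sub] by simp
qed

lemma trancl_dist:
  assumes "(u,v) \<in> (DA E w s t)\<^sup>+"
  shows "gdist E w s u < gdist E w s v \<and> gdist E w u v = gdist E w s v - gdist E w s u"
proof -
  have "u \<in> Domain (DA E w s t)" using assms by (metis DomainI trancl_domain)
  have "v \<in> Range (DA E w s t)" using assms by (metis RangeI trancl_range)
  then have "u \<in> Domain E" "v \<in> Range E" using DA_E \<open>u \<in> Domain (DA E w s t)\<close> by auto
  then have V: "u \<in> V" "v \<in> V" using EV by auto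
  have "gdist E w s u < gdist E w s v \<and> gdist E w u v \<le> gdist E w s v - gdist E w s u"
    using assms
  proof (induction rule: trancl_induct)
    case (base y)
    have a: "(u,y) \<in> E" "gdist E w s y = gdist E w s u + w u y" using arc_prop[OF base] by auto
    show ?case using a wpos[OF a(1)] edge_d[OF a(1)] by simp
  next
    case (step y z)
    have a: "(y,z) \<in> E" "gdist E w s z = gdist E w s y + w y z" using arc_prop[OF step(2)] by auto
    have Vs: "u \<in> V" "y \<in> V" "z \<in> V" using V(1) a(1) EV by auto
    have "gdist E w u z \<le> gdist E w u y + gdist E w y z" using tri_V[OF Vs] .
    then show ?case using step(3) a wpos[OF a(1)] edge_d[OF a(1)] by simp
  qed
  moreover have "gdist E w s v \<le> gdist E w s u + gdist E w u v" using tri_V[OF sV V] .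
  ultimately show ?thesis by simp
qed

lemma acyc_DA: "acyclic (DA E w s t)"
  unfolding acyclic_def using trancl_dist by blast

lemma sp_dpath: "shortest_path E w p s t \<Longrightarrow> is_path (DA E w s t) p s t"
  unfolding shortest_path_def is_path_def is_walk_def DA_def by blast

lemma DV_reach: "v \<in> DV E w s t \<Longrightarrow> (s,v) \<in> (DA E w s t)\<^sup>* \<and> (v,t) \<in> (DA E w s t)\<^sup>*"
  unfolding DV_def using sp_dpath path_mem by fast

lemma DA_DV: "(u,v) \<in> DA E w s t \<Longrightarrow> u \<in> DV E w s t \<and> v \<in> DV E w s t"
proof -
  assume "(u,v) \<in> DA E w s t"
  then obtain p i where pi: "shortest_path E w p s t" "i < length p - 1" "u = p!i" "v = p!Suc i"
    unfolding DA_def by blast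
  have "Suc i < length p" using pi(2) by linarith
  then have "u \<in> set p" "v \<in> set p" using pi by auto
  then show ?thesis unfolding DV_def using pi(1) by blast
qed

lemma trancl_DV: "(u,v) \<in> (DA E w s t)\<^sup>+ \<Longrightarrow> u \<in> DV E w s t \<and> v \<in> DV E w s t"
proof -
  assume a: "(u,v) \<in> (DA E w s t)\<^sup>+"
  have "u \<in> Domain (DA E w s t)" using a by (metis DomainI trancl_domain)
  moreover have "v \<in> Range (DA E w s t)" using a by (metis RangeI trancl_range)
  ultimately show ?thesis using DA_DV by blast
qed

lemma sdom_gdom: "sdom E w s t v x = gdom (DA E w s t) s v x"
  unfolding sdom_def gdom_def dpath_def by simp

lemma tdom_gdom: "tdom E w s t v x = gdom ((DA E w s t)\<inverse>) t v x"
proof -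
  have "(\<forall>p. is_path (DA E w s t) p x t \<longrightarrow> v \<in> set p) \<longleftrightarrow> (\<forall>p. is_path ((DA E w s t)\<inverse>) p t x \<longrightarrow> v \<in> set p)"
  proof
    assume H: "\<forall>p. is_path (DA E w s t) p x t \<longrightarrow> v \<in> set p"
    show "\<forall>p. is_path ((DA E w s t)\<inverse>) p t x \<longrightarrow> v \<in> set p"
    proof (intro allI impI)
      fix p assume "is_path ((DA E w s t)\<inverse>) p t x"
      then have "is_path (DA E w s t) (rev p) x t" using path_rev[of "DA E w s t" "rev p" x t] by simp
      then show "v \<in> set p" using H by fastforce
    qed
  next
    assume H: "\<forall>p. is_path ((DA E w s t)\<inverse>) p t x \<longrightarrow> v \<in> set p"
    show "\<forall>p. is_path (DA E w s t) p x t \<longrightarrow> v \<in> set p"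
    proof (intro allI impI)
      fix p assume "is_path (DA E w s t) p x t"
      then have "is_path ((DA E w s t)\<inverse>) (rev p) t x" using path_rev[of "DA E w s t" p x t] by simp
      then show "v \<in> set p" using H by fastforce
    qed
  qed
  then show ?thesis unfolding tdom_def gdom_def dpath_def by simp
qed

lemma Is_spec:
  assumes "x \<in> DV E w s t" "x \<noteq> s"
  shows "sdom E w s t (Is E w s t x) x \<and> (\<forall>u. sdom E w s t u x \<and> u \<noteq> Is E w s t x \<longrightarrow> sdom E w s t u (Is E w s t x))"
proof -
  have "(s,x) \<in> (DA E w s t)\<^sup>*" using DV_reach[OF assms(1)] by simp
  then have "\<exists>!v. gdom (DA E w s t) s v x \<and> (\<forall>u. gdom (DA E w s t) s u x \<and> u \<noteq> v \<longrightarrow> gdom (DA E w s t) s u v)"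
    using idom_unique[OF finite_DA acyc_DA] assms(2) by simp
  then have "\<exists>!v. sdom E w s t v x \<and> (\<forall>u. sdom E w s t u x \<and> u \<noteq> v \<longrightarrow> sdom E w s t u v)"
    by (simp add: sdom_gdom)
  from theI'[OF this] show ?thesis unfolding Is_def .
qed

lemma It_spec:
  assumes "z \<in> DV E w s t" "z \<noteq> t"
  shows "tdom E w s t (It E w s t z) z \<and> (\<forall>u. tdom E w s t u z \<and> u \<noteq> It E w s t z \<longrightarrow> tdom E w s t u (It E w s t z))"
proof -
  have tzr: "(t,z) \<in> ((DA E w s t)\<inverse>)\<^sup>*" using DV_reach[OF assms(1)] by (simp add: rtrancl_converse)
  have f: "finite ((DA E w s t)\<inverse>)" using finite_DA by simp
  have a: "acyclic ((DA E w s t)\<inverse>)" using acyc_DA by simp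
  have tz: "t \<noteq> z" using assms(2) by simp
  have "\<exists>!v. gdom ((DA E w s t)\<inverse>) t v z \<and> (\<forall>u. gdom ((DA E w s t)\<inverse>) t u z \<and> u \<noteq> v \<longrightarrow> gdom ((DA E w s t)\<inverse>) t u v)"
    by (rule idom_unique[OF f a tz tzr])
  then have "\<exists>!v. tdom E w s t v z \<and> (\<forall>u. tdom E w s t u z \<and> u \<noteq> v \<longrightarrow> tdom E w s t u v)"
    by (simp add: tdom_gdom)
  from theI'[OF this] show ?thesis unfolding It_def .
qed

end



theorem lemma6:
  fixes V :: "'a set" and E :: "('a \<times> 'a) set" and w :: "'a \<Rightarrow> 'a \<Rightarrow> real"
    and s t x ystar :: 'a
  assumes "simple_graph V E w"
    and "s \<in> V" and "t \<in> V"
    and "x \<in> DV E w s t" and "x \<noteq> s"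
    and "gstar E w s t x \<noteq> \<infinity>"
    and "ystar \<in> DV E w s t"
    and "gfun E w s t x ystar = gstar E w s t x"
  shows "\<exists>P1 P2 P3. dpath E w s t P1 s x \<and> dpath E w s t P2 ystar x \<and> dpath E w s t P3 ystar t
           \<and> int_disjoint P1 P2 \<and> int_disjoint P1 P3 \<and> int_disjoint P2 P3"
proof -
  note G = assms(1,2,3)
  let ?A = "DA E w s t"
  let ?d = "gdist E w"
  have fin: "finite ?A" using finite_DA[OF G] .
  have acyc: "acyclic ?A" using acyc_DA[OF G] .
  have gy: "gfun E w s t x ystar \<noteq> \<infinity>" using assms(6,8) by simp
  then have cond: "ystar \<in> Cset E w s t x \<and> anc E w s t x (It E w s t ystar)"
    unfolding gfun_def by (auto split: if_splits)
  then have gyv: "gfun E w s t x ystar = ereal (?d ystar x)" unfolding gfun_def by simp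
  define a where "a = Is E w s t x"
  have ay: "(a, ystar) \<in> ?A\<^sup>+" and yx: "(ystar, x) \<in> ?A\<^sup>+" and xb: "(x, It E w s t ystar) \<in> ?A\<^sup>+"
    using cond unfolding Cset_def anc_def a_def by auto
  have xr: "(s,x) \<in> ?A\<^sup>* \<and> (x,t) \<in> ?A\<^sup>*" using DV_reach[OF G assms(4)] .
  have Isx: "sdom E w s t a x \<and> (\<forall>u. sdom E w s t u x \<and> u \<noteq> a \<longrightarrow> sdom E w s t u a)"
    using Is_spec[OF G assms(4,5)] unfolding a_def .
  have aDV: "a \<in> DV E w s t" using trancl_DV[OF G ay] by simp
  have ar: "(s,a) \<in> ?A\<^sup>*" using DV_reach[OF G aDV] by simp

  have contra: False
    if zh: "(ystar,z) \<in> ?A\<^sup>+" "(z,x) \<in> ?A\<^sup>+" "is_path ?A Q z x" "is_path ?A R z t" "set Q \<inter> set R = {z}"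
    for z Q R
  proof -
    have zDV: "z \<in> DV E w s t" using trancl_DV[OF G zh(2)] by simp
    have znt: "z \<noteq> t"
    proof
      assume "z = t"
      then show False using acyc_no_cycle[OF acyc zh(2)] xr by simp
    qed
    have Itz: "tdom E w s t (It E w s t z) z" using It_spec[OF G zDV znt] by simp
    define b where "b = It E w s t z"
    obtain Rx where Rx: "is_path ?A Rx x t" using rtrancl_path[OF acyc] xr by blast
    have QRx: "is_path ?A (Q @ tl Rx) z t" using path_append[OF acyc zh(3) Rx] .
    have bQR: "b \<in> set (Q @ tl Rx)" "b \<in> set R" "b \<noteq> z"
      using Itz QRx zh(4) unfolding tdom_def dpath_def b_def by auto
    have xR: "x \<notin> set R"
    proof
      assume "x \<in> set R"
      then have "x \<in> set Q \<inter> set R" using path_last_mem[OF zh(3)] by simp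
      then have "x = z" using zh(5) by simp
      then show False using zh(2) acyc unfolding acyclic_def by simp
    qed
    have "b \<notin> set Q" using bQR zh(5) by blast
    then have "b \<in> set (tl Rx)" using bQR(1) by simp
    then have bRx: "b \<in> set Rx" by (cases Rx) auto
    have "b \<noteq> x" using bQR(2) xR by blast
    then have xb': "(x, b) \<in> ?A\<^sup>+" using path_mem_trancl1[OF Rx bRx] by simp
    have "(a, z) \<in> ?A\<^sup>+" using ay zh(1) by simp
    then have zC: "z \<in> Cset E w s t x" using zh(2) unfolding Cset_def anc_def a_def by simp
    have gz: "gfun E w s t x z = ereal (?d z x)"
      using zC xb' unfolding gfun_def anc_def b_def by simp
    have "gstar E w s t x \<le> gfun E w s t x z" unfolding gstar_def by (rule INF_lower[OF zDV])
    then have "ereal (?d ystar x) \<le> ereal (?d z x)" using gz gyv assms(8) by simp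
    then have le: "?d ystar x \<le> ?d z x" by simp
    have "?d ystar x = ?d s x - ?d s ystar" using trancl_dist[OF G yx] by simp
    moreover have "?d z x = ?d s x - ?d s z" using trancl_dist[OF G zh(2)] by simp
    moreover have "?d s ystar < ?d s z" using trancl_dist[OF G zh(1)] by simp
    ultimately show False using le by simp
  qed

  have yDV: "ystar \<in> DV E w s t" by (rule assms(7))
  have ynt: "ystar \<noteq> t"
  proof
    assume "ystar = t"
    then show False using acyc_no_cycle[OF acyc yx] xr by simp
  qed
  obtain P3 where P3: "is_path ?A P3 ystar t" "x \<notin> set P3"
  proof -
    have "\<exists>P3. is_path ?A P3 ystar t \<and> x \<notin> set P3"
    proof (rule ccontr)
      assume "\<not> (\<exists>P3. is_path ?A P3 ystar t \<and> x \<notin> set P3)"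
      then have allx: "\<forall>P. is_path ?A P ystar t \<longrightarrow> x \<in> set P" by blast
      have xny: "x \<noteq> ystar" using yx acyc unfolding acyclic_def by auto
      have tx: "tdom E w s t x ystar" using allx xny unfolding tdom_def dpath_def by simp
      define b where "b = It E w s t ystar"
      have Its: "\<forall>u. tdom E w s t u ystar \<and> u \<noteq> b \<longrightarrow> tdom E w s t u b"
        using It_spec[OF G yDV ynt] unfolding b_def by blast
      have xb2: "(x,b) \<in> ?A\<^sup>+" using xb unfolding b_def .
      have "x \<noteq> b" using xb2 acyc unfolding acyclic_def by auto
      then have txb: "tdom E w s t x b" using Its tx by blast
      have bDV: "b \<in> DV E w s t" using trancl_DV[OF G xb2] by simp
      obtain Rb where Rb: "is_path ?A Rb b t" using rtrancl_path[OF acyc] DV_reach[OF G bDV] by blast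
      have "x \<in> set Rb" using txb Rb unfolding tdom_def dpath_def by blast
      then have "(b,x) \<in> ?A\<^sup>*" using path_mem[OF Rb] by simp
      then show False using acyc_no_cycle[OF acyc xb2] by simp
    qed
    then show ?thesis using that by blast
  qed

  have nsep: "\<not> sepv ?A s ystar x"
  proof
    assume "sepv ?A s ystar x"
    then obtain v where v: "v \<noteq> x" "\<forall>P. is_path ?A P s x \<longrightarrow> v \<in> set P" "\<forall>P. is_path ?A P ystar x \<longrightarrow> v \<in> set P"
      unfolding sepv_def by blast
    have sv: "sdom E w s t v x" using v(1,2) unfolding sdom_def dpath_def by simp
    obtain Py where Py: "is_path ?A Py ystar x" using rtrancl_path[OF acyc] yx by (meson trancl_into_rtrancl)
    have "v \<in> set Py" using v(3) Py by blast
    then have yv: "(ystar, v) \<in> ?A\<^sup>*" using path_mem[OF Py] by simp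
    show False
    proof (cases "v = a")
      case True
      then show False using acyc_no_cycle[OF acyc ay] yv by simp
    next
      case False
      then have "sdom E w s t v a" using Isx sv by blast
      moreover obtain Pa where Pa: "is_path ?A Pa s a" using rtrancl_path[OF acyc ar] by blast
      ultimately have "v \<in> set Pa" unfolding sdom_def dpath_def by blast
      then have "(v, a) \<in> ?A\<^sup>*" using path_mem[OF Pa] by simp
      then have "(ystar, a) \<in> ?A\<^sup>*" using yv by simp
      then show False using acyc_no_cycle[OF acyc ay] by simp
    qed
  qed
  have sny: "s \<noteq> ystar"
  proof
    assume "s = ystar"
    then show False using acyc_no_cycle[OF acyc ay] ar by simp
  qed
  obtain P1 P2 where P12: "is_path ?A P1 s x" "is_path ?A P2 ystar x" "set P1 \<inter> set P2 = {x}"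
    using fan[OF fin acyc sny _ _ nsep] xr yx by (meson trancl_into_rtrancl)

  have P23: "set P2 \<inter> set P3 = {ystar}"
  proof -
    have "ystar \<in> set P2 \<inter> set P3" using path_hd_mem[OF P12(2)] path_hd_mem[OF P3(1)] by simp
    then obtain i j where ij: "i < length P2" "j < length P3" "P2!i = P3!j"
      "set (drop i P2) \<inter> set (drop j P3) = {P2!i}"
      using last_meet[of P2 P3] by blast
    define z where "z = P2!i"
    have "z = ystar"
    proof (rule ccontr)
      assume zy: "z \<noteq> ystar"
      have zP3: "z \<in> set P3" using ij z_def by (metis nth_mem)
      have zP2: "z \<in> set P2" using ij z_def by (metis nth_mem)
      have "(ystar, z) \<in> ?A\<^sup>+" using path_mem_trancl1[OF P3(1) zP3 zy] .
      moreover have "z \<noteq> x" using zP3 P3(2) by blast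
      then have "(z, x) \<in> ?A\<^sup>+" using path_mem_trancl2[OF P12(2) zP2] by simp
      moreover have "is_path ?A (drop i P2) z x" using path_drop[OF P12(2) ij(1)] z_def by simp
      moreover have "is_path ?A (drop j P3) z t" using path_drop[OF P3(1) ij(2)] z_def ij(3) by simp
      ultimately show False using contra ij(4) z_def by blast
    qed
    have d2: "distinct P2" using P12(2) unfolding is_path_def by simp
    have d3: "distinct P3" using P3(1) unfolding is_path_def by simp
    have h2: "P2!0 = ystar" "0 < length P2" using P12(2) unfolding is_path_def is_walk_def by (auto simp: hd_conv_nth)
    have h3: "P3!0 = ystar" "0 < length P3" using P3(1) unfolding is_path_def is_walk_def by (auto simp: hd_conv_nth)
    have "i = 0" using nth_eq_iff_index_eq[OF d2 ij(1) h2(2)] h2(1) \<open>z = ystar\<close> z_def by simp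
    moreover have "j = 0" using nth_eq_iff_index_eq[OF d3 ij(2) h3(2)] h3(1) \<open>z = ystar\<close> z_def ij(3) by simp
    ultimately show ?thesis using ij(4) z_def \<open>z = ystar\<close> by simp
  qed

  have P13: "set P1 \<inter> set P3 = {}"
  proof (rule ccontr)
    assume ne: "set P1 \<inter> set P3 \<noteq> {}"
    then obtain i j where ij: "i < length P1" "j < length P3" "P1!i = P3!j"
      "set (drop i P1) \<inter> set (drop j P3) = {P1!i}"
      using last_meet[of P1 P3] by blast
    define z where "z = P1!i"
    have zP3: "z \<in> set P3" using ij z_def by (metis nth_mem)
    have zP1: "z \<in> set P1" using ij z_def by (metis nth_mem)
    have yP1: "ystar \<notin> set P1"
    proof
      assume "ystar \<in> set P1"
      then have "ystar \<in> set P1 \<inter> set P2" using path_hd_mem[OF P12(2)] by simp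
      then have "ystar = x" using P12(3) by simp
      then show False using yx acyc unfolding acyclic_def by simp
    qed
    have zy: "z \<noteq> ystar" using zP1 yP1 by blast
    have "(ystar, z) \<in> ?A\<^sup>+" using path_mem_trancl1[OF P3(1) zP3 zy] .
    moreover have "z \<noteq> x" using zP3 P3(2) by blast
    then have "(z, x) \<in> ?A\<^sup>+" using path_mem_trancl2[OF P12(1) zP1] by simp
    moreover have "is_path ?A (drop i P1) z x" using path_drop[OF P12(1) ij(1)] z_def by simp
    moreover have "is_path ?A (drop j P3) z t" using path_drop[OF P3(1) ij(2)] z_def ij(3) by simp
    ultimately show False using contra ij(4) z_def by blast
  qed

  have e1: "hd P1 = s" "last P1 = x" using P12(1) unfolding is_path_def is_walk_def by auto
  have e2: "hd P2 = ystar" "last P2 = x" using P12(2) unfolding is_path_def is_walk_def by auto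
  have e3: "hd P3 = ystar" "last P3 = t" using P3(1) unfolding is_path_def is_walk_def by auto
  have "int_disjoint P1 P2" unfolding int_disjoint_def e1 e2 using P12(3) by auto
  moreover have "int_disjoint P1 P3" unfolding int_disjoint_def using P13 by simp
  moreover have "int_disjoint P2 P3" unfolding int_disjoint_def e2 e3 using P23 by auto
  moreover have "dpath E w s t P1 s x" "dpath E w s t P2 ystar x" "dpath E w s t P3 ystar t"
    unfolding dpath_def using P12 P3 by auto
  ultimately show ?thesis by blast
qed



end
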